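(* Let $V = \{v_1, \dots, v_d\}$ be totally ordered by $v_1 < \cdots < v_d$. Let $\Gamma$ be the order complex (complex of chains) of the poset of intervals $[v_i, v_j] = \{v_i, v_{i+1}, \dots, v_j\}$, $1 \le i \le j \le d$, ordered by inclusion. For a chain $G \in \Gamma$, let $\sigma(G) \subseteq V$ be the set of all endpoints $v_i, v_j$ of the intervals $[v_i, v_j]$ in $G$. Then $\sigma : \Gamma \to 2^V$ makes $\Gamma$ a geometric simplicial subdivision of the simplex $2^V$. Moreover, $\Gamma$ has exactly $2^{d-1}$ facets.
   Context: A simplicial subdivision of $2^V$ is a simplicial complex $\Gamma$ with a map $\sigma : \Gamma \to 2^V$ such that, for each $F \subseteq V$, $\sigma^{-1}(2^F)$ is a subcomplex homeomorphic to a ball of dimension $|F|-1$ whose interior is $\sigma^{-1}(F)$. It is geometric if there is a geometric realization of $\Gamma$ that triangulates a geometric simplex realizing $2^V$, with each face $G$ of $\Gamma$ realized inside the face $\sigma(G)$ of that simplex, and with the relative interior of $G$ contained in the relative interior of $\sigma(G)$. *)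

theory Defs
  imports "HOL-Analysis.Analysis"
begin

definition simplicial_complex :: "'v set set \<Rightarrow> bool" where
  "simplicial_complex \<Gamma> \<longleftrightarrow> finite \<Gamma> \<and> {} \<in> \<Gamma> \<and> (\<forall>G\<in>\<Gamma>. finite G) \<and>
     (\<forall>G\<in>\<Gamma>. \<forall>H. H \<subseteq> G \<longrightarrow> H \<in> \<Gamma>)"

definition facets :: "'v set set \<Rightarrow> 'v set set" where
  "facets \<Gamma> = {G \<in> \<Gamma>. \<forall>H\<in>\<Gamma>. G \<subseteq> H \<longrightarrow> H = G}"

definition geometric_realization :: "'v set set \<Rightarrow> ('v \<Rightarrow> 'e::euclidean_space) \<Rightarrow> bool" where
  "geometric_realization \<Gamma> f \<longleftrightarrow>
     (\<forall>G\<in>\<Gamma>. inj_on f G \<and> \<not> affine_dependent (f ` G)) \<and>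
     (\<forall>G\<in>\<Gamma>. \<forall>H\<in>\<Gamma>. convex hull (f ` G) \<inter> convex hull (f ` H) = convex hull (f ` (G \<inter> H)))"

definition polyhedron :: "'v set set \<Rightarrow> ('v \<Rightarrow> 'e::euclidean_space) \<Rightarrow> 'e set" where
  "polyhedron \<Delta> f = (\<Union>G\<in>\<Delta>. convex hull (f ` G))"

text \<open>Topological simplicial subdivision of 2^V (with respect to the realization f
of \<Gamma>): for every F \<subseteq> V, the preimage of 2^F is a subcomplex whose realization is
homeomorphic to a ball of dimension |F|-1, with interior the union of the
relative interiors of the faces in the preimage of F. (The (-1)-ball is empty.)\<close>
definition simplicial_subdivision_wrt ::
  "'a set \<Rightarrow> 'v set set \<Rightarrow> ('v set \<Rightarrow> 'a set) \<Rightarrow> ('v \<Rightarrow> 'e::euclidean_space) \<Rightarrow> bool" where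
  "simplicial_subdivision_wrt V \<Gamma> \<sigma> f \<longleftrightarrow>
     simplicial_complex \<Gamma> \<and> geometric_realization \<Gamma> f \<and> (\<forall>G\<in>\<Gamma>. \<sigma> G \<subseteq> V) \<and>
     (\<forall>F. F \<subseteq> V \<longrightarrow>
        (\<forall>G\<in>\<Gamma>. \<forall>H. \<sigma> G \<subseteq> F \<and> H \<subseteq> G \<longrightarrow> \<sigma> H \<subseteq> F) \<and>
        (F = {} \<longrightarrow> {G\<in>\<Gamma>. \<sigma> G \<subseteq> F} = {{}}) \<and>
        (F \<noteq> {} \<longrightarrow>
          (\<exists>(T::'e set) h k. subspace T \<and> dim T = card F - 1 \<and>
             homeomorphism (polyhedron {G\<in>\<Gamma>. \<sigma> G \<subseteq> F} f) (cball 0 1 \<inter> T) h k \<and>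
             h ` (\<Union>G\<in>{G\<in>\<Gamma>. \<sigma> G = F}. rel_interior (convex hull (f ` G))) = ball 0 1 \<inter> T)))"

definition geometric_subdivision ::
  "'e::euclidean_space itself \<Rightarrow> 'a set \<Rightarrow> 'v set set \<Rightarrow> ('v set \<Rightarrow> 'a set) \<Rightarrow> bool" where
  "geometric_subdivision (_::'e itself) V \<Gamma> \<sigma> \<longleftrightarrow>
     finite V \<and>
     (\<exists>(p::'a \<Rightarrow> 'e) (f::'v \<Rightarrow> 'e).
        inj_on p V \<and> \<not> affine_dependent (p ` V) \<and>
        simplicial_subdivision_wrt V \<Gamma> \<sigma> f \<and>
        polyhedron \<Gamma> f = convex hull (p ` V) \<and>
        (\<forall>G\<in>\<Gamma>. convex hull (f ` G) \<subseteq> convex hull (p ` \<sigma> G) \<and>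
                 rel_interior (convex hull (f ` G)) \<subseteq> rel_interior (convex hull (p ` \<sigma> G))))"

definition intervals :: "('n::{finite,linorder}) set set" where
  "intervals = {{a..b} | a b. a \<le> b}"

definition interval_chain_complex :: "('n::{finite,linorder}) set set set" where
  "interval_chain_complex =
     {G. G \<subseteq> intervals \<and> (\<forall>I\<in>G. \<forall>J\<in>G. I \<subseteq> J \<or> J \<subseteq> I)}"

definition endpoints :: "('n::{finite,linorder}) set set \<Rightarrow> 'n set" where
  "endpoints G = {x. \<exists>a b. a \<le> b \<and> {a..b} \<in> G \<and> (x = a \<or> x = b)}"

end

theory Submission
  imports Defs
begin


definition fv :: "('n::{finite,linorder}) set \<Rightarrow> (real, 'n) vec" where
  "fv I = (1/2) *\<^sub>R (axis (Min I) 1 + axis (Max I) 1)"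

lemma fv_nth: "fv I $ v = (if v = Min I then 1/2 else 0) + (if v = Max I then 1/2 else 0)"
  by (simp add: fv_def axis_def)

lemma fv_nonneg: "fv I $ v \<ge> 0"
  by (simp add: fv_nth)

lemma fv_pos: "v = Min I \<or> v = Max I \<Longrightarrow> fv I $ v > 0"
  by (auto simp add: fv_nth)

lemma fv_zero: "v \<noteq> Min I \<Longrightarrow> v \<noteq> Max I \<Longrightarrow> fv I $ v = 0"
  by (simp add: fv_nth)

lemma fv_sum: "sum (\<lambda>v. fv I $ v) UNIV = 1"
proof -
  have "sum (\<lambda>v. fv I $ v) UNIV = sum (\<lambda>v. if v = Min I then 1/2 else 0) UNIV + sum (\<lambda>v. if v = Max I then 1/2 else 0) UNIV"
    unfolding fv_nth by (rule sum.distrib)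
  also have "\<dots> = 1" by (simp only: sum.delta finite UNIV_I if_True)
  finally show ?thesis .
qed

lemma interval_Min_Max:
  fixes a b :: "'n::{finite,linorder}"
  assumes "a \<le> b" shows "Min {a..b} = a" "Max {a..b} = b"
  using assms by (intro Min_eqI Max_eqI; simp)+

lemma intervalsE:
  assumes "I \<in> (intervals :: ('n::{finite,linorder}) set set)"
  shows "I = {Min I..Max I}" "Min I \<le> Max I" "Min I \<in> I" "Max I \<in> I" "I \<noteq> {}"
proof -
  obtain a b where ab: "a \<le> b" "I = {a..b}" using assms unfolding intervals_def by blast
  then have "Min I = a" "Max I = b" using interval_Min_Max by auto
  then show "I = {Min I..Max I}" "Min I \<le> Max I" "Min I \<in> I" "Max I \<in> I" "I \<noteq> {}"
    using ab by auto
qed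

lemma endpoints_alt:
  assumes "G \<subseteq> intervals"
  shows "endpoints G = {x. \<exists>I\<in>G. x = Min I \<or> x = Max I}"
proof
  show "endpoints G \<subseteq> {x. \<exists>I\<in>G. x = Min I \<or> x = Max I}"
  proof
    fix x assume "x \<in> endpoints G"
    then obtain a b where ab: "a \<le> b" "{a..b} \<in> G" "x = a \<or> x = b" unfolding endpoints_def by blast
    then have "x = Min {a..b} \<or> x = Max {a..b}" using interval_Min_Max[OF ab(1)] by simp
    then show "x \<in> {x. \<exists>I\<in>G. x = Min I \<or> x = Max I}" using ab(2) by blast
  qed
  show "{x. \<exists>I\<in>G. x = Min I \<or> x = Max I} \<subseteq> endpoints G"
  proof
    fix x assume "x \<in> {x. \<exists>I\<in>G. x = Min I \<or> x = Max I}"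
    then obtain I where I: "I \<in> G" "x = Min I \<or> x = Max I" by auto
    then have "I \<in> intervals" using assms by auto
    then have e: "{Min I..Max I} = I" "Min I \<le> Max I" using intervalsE(1,2)[of I] by metis+
    have "Min I \<le> Max I \<and> {Min I..Max I} \<in> G \<and> (x = Min I \<or> x = Max I)"
      using e I by simp
    then show "x \<in> endpoints G" unfolding endpoints_def by blast
  qed
qed


lemma finite_any[simp]: "finite (A :: ('n::finite) set set)"
  by simp

lemma IC_sub: "G \<in> interval_chain_complex \<Longrightarrow> H \<subseteq> G \<Longrightarrow> H \<in> interval_chain_complex"
  unfolding interval_chain_complex_def by blast

lemma IC_intervals: "G \<in> interval_chain_complex \<Longrightarrow> I \<in> G \<Longrightarrow> I \<in> intervals"
  unfolding interval_chain_complex_def by blast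

lemma IC_chain: "G \<in> interval_chain_complex \<Longrightarrow> I \<in> G \<Longrightarrow> J \<in> G \<Longrightarrow> I \<subseteq> J \<or> J \<subseteq> I"
  unfolding interval_chain_complex_def by blast

definition rep :: "('n::{finite,linorder}) set set \<Rightarrow> ('n set \<Rightarrow> real) \<Rightarrow> (real,'n) vec \<Rightarrow> bool" where
  "rep G l x \<longleftrightarrow> G \<in> interval_chain_complex \<and> (\<forall>I\<in>G. l I > 0) \<and> x = (\<Sum>I\<in>G. l I *\<^sub>R fv I)"

lemma rep_nth: "rep G l x \<Longrightarrow> x $ v = (\<Sum>I\<in>G. l I * fv I $ v)"
  unfolding rep_def by simp

lemma rep_nonneg: "rep G l x \<Longrightarrow> 0 \<le> x $ v"
  unfolding rep_nth by (rule sum_nonneg) (auto simp: rep_def fv_nonneg less_imp_le)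

lemma rep_pos:
  assumes "rep G l x" "I \<in> G" "v = Min I \<or> v = Max I"
  shows "x $ v > 0"
proof -
  have lp: "\<forall>I\<in>G. l I > 0" using assms(1) unfolding rep_def by blast
  have "0 < l I * fv I $ v"
    by (rule mult_pos_pos) (use lp assms(2) fv_pos[OF assms(3)] in auto)
  also have "\<dots> \<le> (\<Sum>J\<in>G. l J * fv J $ v)"
  proof (rule member_le_sum)
    fix J assume "J \<in> G - {I}"
    then show "0 \<le> l J * fv J $ v" using lp fv_nonneg[of J v] by (simp add: less_imp_le)
  qed (use assms(2) in auto)
  finally show ?thesis using rep_nth[OF assms(1)] by simp
qed

lemma rep_zero:
  assumes "rep G l x" "\<forall>I\<in>G. v \<noteq> Min I \<and> v \<noteq> Max I"
  shows "x $ v = 0"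
  using assms by (simp add: rep_nth fv_zero)

lemma rep_zero':
  assumes "rep G l x" "\<forall>I\<in>G. v \<notin> I"
  shows "x $ v = 0"
proof (rule rep_zero[OF assms(1)], intro ballI)
  fix I assume "I \<in> G"
  then have "I \<in> intervals" using assms(1) IC_intervals unfolding rep_def by blast
  then have "Min I \<in> I" "Max I \<in> I" by (rule intervalsE(3), rule intervalsE(4))
  then show "v \<noteq> Min I \<and> v \<noteq> Max I" using assms(2) \<open>I \<in> G\<close> by auto
qed

lemma rep_supp:
  assumes "rep G l x"
  shows "{v. x $ v \<noteq> 0} = endpoints G"
proof -
  have Gi: "G \<subseteq> intervals" using assms IC_intervals unfolding rep_def by blast
  show ?thesis unfolding endpoints_alt[OF Gi]
  proof (intro equalityI subsetI)
    fix v assume "v \<in> {v. x $ v \<noteq> 0}"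
    then show "v \<in> {x. \<exists>I\<in>G. x = Min I \<or> x = Max I}"
      using rep_zero[OF assms, of v] by auto
  next
    fix v assume "v \<in> {x. \<exists>I\<in>G. x = Min I \<or> x = Max I}"
    then obtain I where "I \<in> G" "v = Min I \<or> v = Max I" by blast
    then have "x $ v > 0" by (rule rep_pos[OF assms])
    then show "v \<in> {v. x $ v \<noteq> 0}" by simp
  qed
qed

lemma rep_sum:
  assumes "rep G l x"
  shows "(\<Sum>v\<in>UNIV. x $ v) = sum l G"
proof -
  have "(\<Sum>v\<in>UNIV. x $ v) = (\<Sum>v\<in>UNIV. \<Sum>I\<in>G. l I * fv I $ v)"
    using rep_nth[OF assms] by simp
  also have "\<dots> = (\<Sum>I\<in>G. \<Sum>v\<in>UNIV. l I * fv I $ v)"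
    by (rule sum.swap)
  also have "\<dots> = (\<Sum>I\<in>G. l I * (\<Sum>v\<in>UNIV. fv I $ v))"
    by (simp only: sum_distrib_left)
  also have "\<dots> = sum l G" by (simp add: fv_sum)
  finally show ?thesis .
qed

lemma chain_max:
  assumes "G \<in> interval_chain_complex" "G \<noteq> {}"
  obtains I0 where "I0 \<in> G" "\<And>J. J \<in> G \<Longrightarrow> J \<subseteq> I0"
proof -
  have "Max (card ` G) \<in> card ` G" using assms(2) by (intro Max_in) auto
  then obtain I0 where I0: "I0 \<in> G" "card I0 = Max (card ` G)" by auto
  have "J \<subseteq> I0" if "J \<in> G" for J
  proof -
    have "card J \<le> card I0" using I0 that by simp
    moreover have "J \<subseteq> I0 \<or> I0 \<subseteq> J" using IC_chain[OF assms(1) that I0(1)] .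
    ultimately show ?thesis using card_seteq[of J I0] by auto
  qed
  then show ?thesis using that I0 by blast
qed

lemma chain_split:
  assumes "G \<in> interval_chain_complex" "I0 \<in> G" "\<And>J. J \<in> G \<Longrightarrow> J \<subseteq> I0"
    and "I0 = {a..b}"
  shows "(\<forall>J\<in>G-{I0}. a \<notin> J) \<or> (\<forall>J\<in>G-{I0}. b \<notin> J)"
proof (rule ccontr)
  assume "\<not> ?thesis"
  then obtain J1 J2 where J: "J1 \<in> G" "J1 \<noteq> I0" "a \<in> J1" "J2 \<in> G" "J2 \<noteq> I0" "b \<in> J2" by blast
  have "\<exists>K\<in>G. K \<noteq> I0 \<and> a \<in> K \<and> b \<in> K"
    using IC_chain[OF assms(1) J(1) J(4)] J by blast
  then obtain K where K: "K \<in> G" "K \<noteq> I0" "a \<in> K" "b \<in> K" by blast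
  have "K \<in> intervals" using IC_intervals[OF assms(1) K(1)] .
  then have KK: "K = {Min K..Max K}" by (rule intervalsE)
  have "{a..b} \<subseteq> K" using K(3,4) by (subst KK, subst (asm) (1 2) KK) auto
  moreover have "K \<subseteq> {a..b}" using assms(3)[OF K(1)] assms(4) by simp
  ultimately have "K = I0" using assms(4) by blast
  with K(2) show False by simp
qed


lemma rep_empty: "rep {} l x \<longleftrightarrow> x = 0"
  unfolding rep_def interval_chain_complex_def by simp

lemma rep_remove:
  assumes "rep G l x" "I0 \<in> G"
  shows "rep (G - {I0}) l (x - l I0 *\<^sub>R fv I0)"
proof -
  have "x = l I0 *\<^sub>R fv I0 + (\<Sum>I\<in>G-{I0}. l I *\<^sub>R fv I)"
    using assms unfolding rep_def by (simp add: sum.remove)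
  then show ?thesis using assms IC_sub[of G "G-{I0}"] unfolding rep_def by auto
qed

lemma rep_unique:
  "rep G l x \<Longrightarrow> rep H m x \<Longrightarrow> G = H \<and> (\<forall>I\<in>G. l I = m I)"
proof (induction "card G" arbitrary: G H l m x rule: less_induct)
  case less
  note rG = less.prems(1) and rH = less.prems(2)
  have GIC: "G \<in> interval_chain_complex" and HIC: "H \<in> interval_chain_complex"
    using rG rH unfolding rep_def by auto
  show ?case
  proof (cases "G = {}")
    case True
    then have x0: "x = 0" using rG rep_empty by blast
    have "H = {}"
    proof (rule ccontr)
      assume "H \<noteq> {}"
      then obtain I where "I \<in> H" by blast
      then have "x $ Min I > 0" by (intro rep_pos[OF rH]) auto
      then show False using x0 by simp
    qed
    then show ?thesis using True by simp
  next
    case False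
    have "H \<noteq> {}"
    proof
      assume "H = {}"
      then have x0: "x = 0" using rH rep_empty by blast
      obtain I where "I \<in> G" using False by blast
      then have "x $ Min I > 0" by (intro rep_pos[OF rG]) auto
      then show False using x0 by simp
    qed
    obtain I0 where I0: "I0 \<in> G" "\<And>J. J \<in> G \<Longrightarrow> J \<subseteq> I0"
      using chain_max[OF GIC False] by blast
    obtain K0 where K0: "K0 \<in> H" "\<And>J. J \<in> H \<Longrightarrow> J \<subseteq> K0"
      using chain_max[OF HIC \<open>H \<noteq> {}\<close>] by blast
    have I0i: "I0 \<in> intervals" and K0i: "K0 \<in> intervals"
      using IC_intervals GIC HIC I0 K0 by auto
    have supp: "endpoints G = endpoints H" using rep_supp[OF rG] rep_supp[OF rH] by simp
    have epG: "endpoints G \<subseteq> I0"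
    proof
      fix v assume "v \<in> endpoints G"
      then obtain J where J: "J \<in> G" "v = Min J \<or> v = Max J"
        using endpoints_alt[of G] GIC IC_intervals by blast
      have "J \<in> intervals" using IC_intervals GIC J by auto
      then have "v \<in> J" using J intervalsE(3,4) by blast
      then show "v \<in> I0" using I0(2)[OF J(1)] by blast
    qed
    have epH: "endpoints H \<subseteq> K0"
    proof
      fix v assume "v \<in> endpoints H"
      then obtain J where J: "J \<in> H" "v = Min J \<or> v = Max J"
        using endpoints_alt[of H] HIC IC_intervals by blast
      have "J \<in> intervals" using IC_intervals HIC J by auto
      then have "v \<in> J" using J intervalsE(3,4) by blast
      then show "v \<in> K0" using K0(2)[OF J(1)] by blast
    qed
    have "Min I0 \<in> endpoints G" "Max I0 \<in> endpoints G"
      using endpoints_alt[of G] GIC IC_intervals I0(1) by blast+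
    then have "Min I0 \<in> K0" "Max I0 \<in> K0" using supp epH by blast+
    then have 1: "Min K0 \<le> Min I0" "Max I0 \<le> Max K0"
      using intervalsE(1)[OF K0i] by (metis atLeastAtMost_iff)+
    have "Min K0 \<in> endpoints H" "Max K0 \<in> endpoints H"
      using endpoints_alt[of H] HIC IC_intervals K0(1) by blast+
    then have "Min K0 \<in> I0" "Max K0 \<in> I0" using supp epG by blast+
    then have 2: "Min I0 \<le> Min K0" "Max K0 \<le> Max I0"
      using intervalsE(1)[OF I0i] by (metis atLeastAtMost_iff)+
    define a where "a = Min I0"
    define b where "b = Max I0"
    have I0ab: "I0 = {a..b}" unfolding a_def b_def by (rule intervalsE(1)[OF I0i])
    have K0I0: "K0 = I0" using 1 2 intervalsE(1)[OF K0i] intervalsE(1)[OF I0i]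
      by (metis order_antisym)
    have ab: "a \<le> b" unfolding a_def b_def using intervalsE(2)[OF I0i] .
    have "l I0 = m I0"
    proof (cases "a = b")
      case True
      then have I0a: "I0 = {a}" using I0ab by simp
      have GI0: "G = {I0}"
      proof
        show "G \<subseteq> {I0}"
        proof
          fix J assume "J \<in> G"
          then have "J \<subseteq> {a}" "J \<noteq> {}" using I0(2) I0a IC_intervals[OF GIC] intervalsE(5) by blast+
          then show "J \<in> {I0}" using I0a by blast
        qed
      qed (use I0 in auto)
      have HI0: "H = {I0}"
      proof
        show "H \<subseteq> {I0}"
        proof
          fix J assume "J \<in> H"
          then have "J \<subseteq> {a}" "J \<noteq> {}" using K0(2) K0I0 I0a IC_intervals[OF HIC] intervalsE(5) by blast+
          then show "J \<in> {I0}" using I0a by blast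
        qed
      qed (use K0 K0I0 in auto)
      have fa: "fv I0 $ a = 1" using I0a by (simp add: fv_nth)
      have "x $ a = l I0" using rep_nth[OF rG, of a] GI0 fa by simp
      moreover have "x $ a = m I0" using rep_nth[OF rH, of a] HI0 fa by simp
      ultimately show ?thesis by simp
    next
      case False
      then have alb: "a < b" using ab by simp
      have fa: "fv I0 $ a = 1/2" "fv I0 $ b = 1/2"
        using alb unfolding fv_nth a_def b_def by auto
      define y where "y = x - l I0 *\<^sub>R fv I0"
      define z where "z = x - m I0 *\<^sub>R fv I0"
      have ry: "rep (G - {I0}) l y" unfolding y_def by (rule rep_remove[OF rG I0(1)])
      have rz: "rep (H - {I0}) m z" unfolding z_def using rep_remove[OF rH K0(1)] K0I0 by simp
      have y0: "y $ a = 0 \<or> y $ b = 0"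
        using chain_split[OF GIC I0(1) I0(2) I0ab] rep_zero'[OF ry] by blast
      have z0: "z $ a = 0 \<or> z $ b = 0"
      proof -
        have K0ab: "K0 = {a..b}" using K0I0 I0ab by simp
        show ?thesis using chain_split[OF HIC K0(1) K0(2) K0ab] K0I0 rep_zero'[OF rz] by blast
      qed
      have "y $ a \<ge> 0" "y $ b \<ge> 0" "z $ a \<ge> 0" "z $ b \<ge> 0"
        using rep_nonneg[OF ry] rep_nonneg[OF rz] by auto
      moreover have "y $ a = x $ a - l I0 / 2" "y $ b = x $ b - l I0 / 2"
        "z $ a = x $ a - m I0 / 2" "z $ b = x $ b - m I0 / 2"
        unfolding y_def z_def using fa by auto
      ultimately show ?thesis using y0 z0 by linarith
    qed
    then have yz: "x - l I0 *\<^sub>R fv I0 = x - m I0 *\<^sub>R fv I0" by simp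
    have ry: "rep (G - {I0}) l (x - l I0 *\<^sub>R fv I0)" by (rule rep_remove[OF rG I0(1)])
    have rz: "rep (H - {I0}) m (x - l I0 *\<^sub>R fv I0)" using rep_remove[OF rH K0(1)] K0I0 \<open>l I0 = m I0\<close> by simp
    have "card (G - {I0}) < card G" using I0(1) by (rule card_Diff1_less[OF finite_any])
    from less.hyps[OF this ry rz]
    have "G - {I0} = H - {I0}" "\<forall>I\<in>G-{I0}. l I = m I" by auto
    then show ?thesis using I0(1) K0(1) K0I0 \<open>l I0 = m I0\<close> by blast
  qed
qed


lemma rep_exists:
  fixes x :: "(real,'n::{finite,linorder}) vec"
  shows "(\<forall>v. 0 \<le> x $ v) \<Longrightarrow> \<exists>G l. rep G l x"
proof (induction "card {v. x $ v \<noteq> 0}" arbitrary: x rule: less_induct)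
  case less
  define S where "S = {v. x $ v \<noteq> 0}"
  show ?case
  proof (cases "S = {}")
    case True
    then have "x = 0" unfolding S_def by (simp add: vec_eq_iff)
    then show ?thesis using rep_empty by blast
  next
    case False
    define a where "a = Min S"
    define b where "b = Max S"
    have aS: "a \<in> S" and bS: "b \<in> S" unfolding a_def b_def using False by auto
    have ab: "a \<le> b" unfolding a_def using Min_le[OF _ bS] by simp
    have Ssub: "S \<subseteq> {a..b}"
    proof
      fix v assume "v \<in> S"
      then show "v \<in> {a..b}" unfolding a_def b_def using Min_le[OF _ \<open>v \<in> S\<close>] Max_ge[OF _ \<open>v \<in> S\<close>] by simp
    qed
    have "x $ a \<noteq> 0" "x $ b \<noteq> 0" using aS bS unfolding S_def by auto
    moreover have "x $ a \<ge> 0" "x $ b \<ge> 0" using less.prems by auto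
    ultimately have xa: "x $ a > 0" "x $ b > 0" by auto
    define I0 where "I0 = {a..b}"
    have I0i: "I0 \<in> intervals" unfolding I0_def intervals_def using ab by blast
    have mm: "Min I0 = a" "Max I0 = b" unfolding I0_def using interval_Min_Max[OF ab] by auto
    define t where "t = (if a = b then x $ a else 2 * min (x $ a) (x $ b))"
    have tpos: "t > 0" unfolding t_def using xa by auto
    define y where "y = x - t *\<^sub>R fv I0"
    have ynth: "y $ v = x $ v - t * ((if v = a then 1/2 else 0) + (if v = b then 1/2 else 0))" for v
      unfolding y_def by (simp add: fv_nth mm)
    have ynn: "\<forall>v. 0 \<le> y $ v"
    proof
      fix v show "0 \<le> y $ v"
        unfolding ynth t_def using less.prems by (cases "a = b") (auto simp: min_def)
    qed
    have y0: "y $ a = 0 \<or> y $ b = 0"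
      unfolding ynth t_def by (cases "a = b") (auto simp: min_def)
    have ysub: "{v. y $ v \<noteq> 0} \<subseteq> S" unfolding S_def
    proof
      fix v assume "v \<in> {v. y $ v \<noteq> 0}"
      then have "y $ v \<noteq> 0" by simp
      show "v \<in> {v. x $ v \<noteq> 0}"
      proof (rule ccontr)
        assume "v \<notin> {v. x $ v \<noteq> 0}"
        then have "x $ v = 0" "v \<noteq> a" "v \<noteq> b" using aS bS unfolding S_def by auto
        then have "y $ v = 0" unfolding ynth by simp
        then show False using \<open>y $ v \<noteq> 0\<close> by simp
      qed
    qed
    have ynot: "a \<notin> {v. y $ v \<noteq> 0} \<or> b \<notin> {v. y $ v \<noteq> 0}" using y0 by auto
    have "{v. y $ v \<noteq> 0} \<noteq> S" using ynot aS bS by blast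
    then have "card {v. y $ v \<noteq> 0} < card {v. x $ v \<noteq> 0}"
      using ysub unfolding S_def by (intro psubset_card_mono) auto
    then obtain G' l' where r': "rep G' l' y" using less.hyps ynn by blast
    have G'IC: "G' \<in> interval_chain_complex" using r' unfolding rep_def by blast
    have ep: "endpoints G' = {v. y $ v \<noteq> 0}" using rep_supp[OF r'] by simp
    have subI0: "J \<subseteq> I0" if "J \<in> G'" for J
    proof -
      have Ji: "J \<in> intervals" using IC_intervals[OF G'IC that] .
      have "Min J \<in> endpoints G'" "Max J \<in> endpoints G'"
        using endpoints_alt[of G'] G'IC IC_intervals that by blast+
      then have "Min J \<in> I0" "Max J \<in> I0" using ep ysub Ssub unfolding I0_def by blast+
      then have "{Min J..Max J} \<subseteq> I0" unfolding I0_def by auto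
      moreover have "{Min J..Max J} = J" using intervalsE(1)[OF Ji] by simp
      ultimately show ?thesis by simp
    qed
    have notin: "I0 \<notin> G'"
    proof
      assume "I0 \<in> G'"
      moreover have "G' \<subseteq> intervals" using G'IC IC_intervals by blast
      ultimately have "Min I0 \<in> endpoints G'" "Max I0 \<in> endpoints G'"
        using endpoints_alt[of G'] by blast+
      then have "a \<in> endpoints G'" "b \<in> endpoints G'" using mm by simp_all
      then show False using ynot ep by blast
    qed
    define G where "G = insert I0 G'"
    define l where "l = l'(I0 := t)"
    have GIC: "G \<in> interval_chain_complex"
      unfolding G_def interval_chain_complex_def
      using G'IC I0i subI0 unfolding interval_chain_complex_def by blast
    have lpos: "\<forall>I\<in>G. l I > 0" using r' tpos notin unfolding G_def l_def rep_def by auto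
    have "(\<Sum>I\<in>G. l I *\<^sub>R fv I) = t *\<^sub>R fv I0 + (\<Sum>I\<in>G'. l I *\<^sub>R fv I)"
      unfolding G_def using notin by (simp add: l_def)
    also have "(\<Sum>I\<in>G'. l I *\<^sub>R fv I) = (\<Sum>I\<in>G'. l' I *\<^sub>R fv I)"
      unfolding l_def using notin by (intro sum.cong) auto
    also have "\<dots> = y" using r' unfolding rep_def by simp
    finally have "x = (\<Sum>I\<in>G. l I *\<^sub>R fv I)" unfolding y_def by simp
    then have "rep G l x" unfolding rep_def using GIC lpos by blast
    then show ?thesis by blast
  qed
qed


lemma lo4:
  fixes a b c d :: "'a::linorder"
  assumes "a \<le> b" "c \<le> d" "a = c \<or> a = d" "c = a \<or> c = b" "b = c \<or> b = d" "d = a \<or> d = b"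
  shows "a = c \<and> b = d"
  using assms by auto

lemma fv_pos_iff: "fv I $ v > 0 \<longleftrightarrow> v = Min I \<or> v = Max I"
proof
  assume "fv I $ v > 0"
  then show "v = Min I \<or> v = Max I" using fv_zero[of v I] by force
qed (rule fv_pos)

lemma fv_inj: "G \<subseteq> intervals \<Longrightarrow> inj_on fv G"
proof (rule inj_onI)
  fix I J assume G: "G \<subseteq> intervals" and IJ: "I \<in> G" "J \<in> G" "fv I = fv J"
  have Ii: "I \<in> intervals" and Ji: "J \<in> intervals" using G IJ by auto
  have c: "(v = Min I \<or> v = Max I) \<longleftrightarrow> (v = Min J \<or> v = Max J)" for v
    using fv_pos_iff[of I v] fv_pos_iff[of J v] IJ(3) by simp
  have o: "Min I \<le> Max I" "Min J \<le> Max J" using intervalsE(2) Ii Ji by auto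
  have "Min I = Min J \<and> Max I = Max J"
    by (rule lo4[OF o]) (use c[of "Min I"] c[of "Max I"] c[of "Min J"] c[of "Max J"] in blast)+
  then show "I = J" using intervalsE(1)[OF Ii] intervalsE(1)[OF Ji] by metis
qed

lemma IC_fv_inj: "G \<in> interval_chain_complex \<Longrightarrow> inj_on fv G"
  using fv_inj IC_intervals by blast

lemma conv_char:
  assumes G: "G \<in> interval_chain_complex"
  shows "x \<in> convex hull (fv ` G) \<longleftrightarrow> (\<exists>G'\<subseteq>G. \<exists>l. rep G' l x) \<and> sum (($) x) UNIV = 1"
proof
  assume "x \<in> convex hull (fv ` G)"
  then obtain u where u: "\<forall>y\<in>fv ` G. 0 \<le> u y" "sum u (fv ` G) = 1" "(\<Sum>y\<in>fv ` G. u y *\<^sub>R y) = x"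
    unfolding convex_hull_finite[OF finite_imageI[OF finite_any]] by blast
  define w where "w = u \<circ> fv"
  have inj: "inj_on fv G" using IC_fv_inj[OF G] .
  have w1: "sum w G = 1" using u(2) sum.reindex[OF inj, of u] unfolding w_def by simp
  have wx: "(\<Sum>I\<in>G. w I *\<^sub>R fv I) = x" using u(3) sum.reindex[OF inj, of "\<lambda>y. u y *\<^sub>R y"] unfolding w_def by simp
  have w0: "\<forall>I\<in>G. 0 \<le> w I" using u(1) unfolding w_def by simp
  define G' where "G' = {I\<in>G. w I > 0}"
  have "(\<Sum>I\<in>G'. w I *\<^sub>R fv I) = (\<Sum>I\<in>G. w I *\<^sub>R fv I)"
    unfolding G'_def by (rule sum.mono_neutral_left) (use w0 in \<open>auto simp: less_le\<close>)
  then have r: "rep G' w x" unfolding rep_def G'_def using IC_sub[OF G] wx by auto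
  have "sum w G' = sum w G"
    unfolding G'_def by (rule sum.mono_neutral_left) (use w0 in \<open>auto simp: less_le\<close>)
  then have "sum (($) x) UNIV = 1" using rep_sum[OF r] w1 by simp
  moreover have "G' \<subseteq> G" unfolding G'_def by auto
  ultimately show "(\<exists>G'\<subseteq>G. \<exists>l. rep G' l x) \<and> sum (($) x) UNIV = 1" using r by blast
next
  assume "(\<exists>G'\<subseteq>G. \<exists>l. rep G' l x) \<and> sum (($) x) UNIV = 1"
  then obtain G' l where G': "G' \<subseteq> G" "rep G' l x" and s: "sum (($) x) UNIV = 1" by blast
  have "sum l G' = 1" using rep_sum[OF G'(2)] s by simp
  moreover have "x = (\<Sum>I\<in>G'. l I *\<^sub>R fv I)" "\<forall>I\<in>G'. l I > 0" using G'(2) unfolding rep_def by auto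
  moreover have "(\<Sum>I\<in>G'. l I *\<^sub>R fv I) \<in> convex hull (fv ` G)"
    by (rule convex_sum[OF finite_any convex_convex_hull \<open>sum l G' = 1\<close>])
       (use G'(1) \<open>\<forall>I\<in>G'. l I > 0\<close> in \<open>auto intro: hull_inc less_imp_le\<close>)
  ultimately show "x \<in> convex hull (fv ` G)" by simp
qed

lemma fv_aff_indep:
  assumes G: "G \<in> interval_chain_complex"
  shows "\<not> affine_dependent (fv ` G)"
proof
  assume "affine_dependent (fv ` G)"
  then obtain U where U: "sum U (fv ` G) = 0" "\<exists>v\<in>fv ` G. U v \<noteq> 0" "(\<Sum>v\<in>fv ` G. U v *\<^sub>R v) = 0"
    unfolding affine_dependent_explicit_finite[OF finite_imageI[OF finite_any]] by blast
  have inj: "inj_on fv G" using IC_fv_inj[OF G] .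
  define w where "w = U \<circ> fv"
  have wz: "(\<Sum>I\<in>G. w I *\<^sub>R fv I) = 0" using U(3) sum.reindex[OF inj, of "\<lambda>y. U y *\<^sub>R y"] unfolding w_def by simp
  obtain I1 where I1: "I1 \<in> G" "w I1 \<noteq> 0" using U(2) unfolding w_def by auto
  define P where "P = {I\<in>G. w I > 0}"
  define N where "N = {I\<in>G. w I < 0}"
  have "(\<Sum>I\<in>G. w I *\<^sub>R fv I) = (\<Sum>I\<in>P. w I *\<^sub>R fv I) + (\<Sum>I\<in>G - P. w I *\<^sub>R fv I)"
    using sum.subset_diff[of P G "\<lambda>I. w I *\<^sub>R fv I"] unfolding P_def by (simp add: add.commute)
  moreover have "(\<Sum>I\<in>G - P. w I *\<^sub>R fv I) = (\<Sum>I\<in>N. w I *\<^sub>R fv I)"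
    unfolding P_def N_def by (rule sum.mono_neutral_right) (auto simp: not_less)
  ultimately have s0: "(\<Sum>I\<in>P. w I *\<^sub>R fv I) + (\<Sum>I\<in>N. w I *\<^sub>R fv I) = 0"
    using wz by simp
  have "(\<Sum>I\<in>N. (- w I) *\<^sub>R fv I) = (\<Sum>I\<in>N. - (w I *\<^sub>R fv I))" by simp
  also have "\<dots> = - (\<Sum>I\<in>N. w I *\<^sub>R fv I)" by (rule sum_negf)
  also have "\<dots> = (\<Sum>I\<in>P. w I *\<^sub>R fv I)" by (metis s0 eq_neg_iff_add_eq_0)
  finally have eqv: "(\<Sum>I\<in>N. (- w I) *\<^sub>R fv I) = (\<Sum>I\<in>P. w I *\<^sub>R fv I)" .
  have rP: "rep P w (\<Sum>I\<in>P. w I *\<^sub>R fv I)"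
    unfolding rep_def P_def using IC_sub[OF G] by auto
  have "rep N (\<lambda>I. - w I) (\<Sum>I\<in>N. (- w I) *\<^sub>R fv I)"
    unfolding rep_def N_def using IC_sub[OF G] by auto
  then have rN: "rep N (\<lambda>I. - w I) (\<Sum>I\<in>P. w I *\<^sub>R fv I)" using eqv by simp
  have "P = N" using rep_unique[OF rP rN] by blast
  then have PN: "P = {}" "N = {}" unfolding P_def N_def by auto
  show False
  proof (cases "w I1 > 0")
    case True then show False using PN(1) I1(1) unfolding P_def by blast
  next
    case False then have "w I1 < 0" using I1(2) by simp
    then show False using PN(2) I1(1) unfolding N_def by blast
  qed
qed

lemma rel_int_char:
  assumes G: "G \<in> interval_chain_complex"
  shows "x \<in> rel_interior (convex hull (fv ` G)) \<longleftrightarrow> (\<exists>l. rep G l x) \<and> sum (($) x) UNIV = 1"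
proof
  have inj: "inj_on fv G" using IC_fv_inj[OF G] .
  assume "x \<in> rel_interior (convex hull (fv ` G))"
  then obtain u where u: "\<forall>y\<in>fv ` G. 0 < u y" "sum u (fv ` G) = 1" "(\<Sum>y\<in>fv ` G. u y *\<^sub>R y) = x"
    unfolding rel_interior_convex_hull_explicit[OF fv_aff_indep[OF G]] by blast
  define w where "w = u \<circ> fv"
  have w1: "sum w G = 1" using u(2) sum.reindex[OF inj, of u] unfolding w_def by simp
  have wx: "(\<Sum>I\<in>G. w I *\<^sub>R fv I) = x" using u(3) sum.reindex[OF inj, of "\<lambda>y. u y *\<^sub>R y"] unfolding w_def by simp
  have w0: "\<forall>I\<in>G. 0 < w I" using u(1) unfolding w_def by simp
  have r: "rep G w x" unfolding rep_def using G wx w0 by auto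
  show "(\<exists>l. rep G l x) \<and> sum (($) x) UNIV = 1" using r rep_sum[OF r] w1 by auto
next
  have inj: "inj_on fv G" using IC_fv_inj[OF G] .
  assume "(\<exists>l. rep G l x) \<and> sum (($) x) UNIV = 1"
  then obtain l where r: "rep G l x" and s: "sum (($) x) UNIV = 1" by blast
  have l1: "sum l G = 1" using rep_sum[OF r] s by simp
  define u where "u = l \<circ> inv_into G fv"
  have ul: "\<And>I. I \<in> G \<Longrightarrow> u (fv I) = l I" unfolding u_def using inj by simp
  have "\<forall>y\<in>fv ` G. 0 < u y" using ul r unfolding rep_def by auto
  moreover have "sum u (fv ` G) = 1" using sum.reindex[OF inj, of u] ul l1 by simp
  moreover have "(\<Sum>y\<in>fv ` G. u y *\<^sub>R y) = x"
    using sum.reindex[OF inj, of "\<lambda>y. u y *\<^sub>R y"] ul r unfolding rep_def by simp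
  ultimately show "x \<in> rel_interior (convex hull (fv ` G))"
    unfolding rel_interior_convex_hull_explicit[OF fv_aff_indep[OF G]] by blast
qed

lemma fv_inter:
  assumes G: "G \<in> interval_chain_complex" and H: "H \<in> interval_chain_complex"
  shows "convex hull (fv ` G) \<inter> convex hull (fv ` H) = convex hull (fv ` (G \<inter> H))"
proof
  show "convex hull (fv ` (G \<inter> H)) \<subseteq> convex hull (fv ` G) \<inter> convex hull (fv ` H)"
    by (simp add: hull_mono image_mono)
  show "convex hull (fv ` G) \<inter> convex hull (fv ` H) \<subseteq> convex hull (fv ` (G \<inter> H))"
  proof
    fix x assume x: "x \<in> convex hull (fv ` G) \<inter> convex hull (fv ` H)"
    then obtain G' l where G': "G' \<subseteq> G" "rep G' l x" and s: "sum (($) x) UNIV = 1"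
      using conv_char[OF G, of x] by blast
    obtain H' m where H': "H' \<subseteq> H" "rep H' m x"
      using conv_char[OF H, of x] x by blast
    have "G' = H'" using rep_unique[OF G'(2) H'(2)] by (rule conjunct1)
    then have sub: "G' \<subseteq> G \<inter> H" using G'(1) H'(1) by blast
    have GH: "G \<inter> H \<in> interval_chain_complex" using IC_sub[OF G] by blast
    have "\<exists>G''\<subseteq>G \<inter> H. \<exists>l. rep G'' l x" using sub G'(2) by blast
    then show "x \<in> convex hull (fv ` (G \<inter> H))" using conv_char[OF GH, of x] s by blast
  qed
qed


definition ax :: "'n::finite \<Rightarrow> (real,'n) vec" where "ax v = axis v 1"

lemma ax_nth: "ax v $ w = (if w = v then 1 else 0)"
  by (simp add: ax_def axis_def)

lemma ax_inj: "inj ax"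
  by (rule injI) (simp add: ax_def axis_eq_axis)

lemma ax_comb: "(\<Sum>v\<in>F. c v *\<^sub>R ax v) $ w = (if w \<in> F then c w else (0::real))"
proof -
  have "(\<Sum>v\<in>F. c v *\<^sub>R ax v) $ w = (\<Sum>v\<in>F. if w = v then c v else 0)"
    by (simp add: ax_nth if_distrib cong: if_cong)
  also have "\<dots> = (if w \<in> F then c w else 0)" by (simp add: sum.delta)
  finally show ?thesis .
qed

lemma ax_expand:
  assumes "\<forall>v. v \<notin> F \<longrightarrow> x $ v = 0"
  shows "x = (\<Sum>v\<in>F. x $ v *\<^sub>R ax v)"
  unfolding vec_eq_iff ax_comb using assms by auto

definition std :: "'n::finite set \<Rightarrow> (real,'n) vec set" where
  "std F = {x. (\<forall>v. 0 \<le> x $ v) \<and> (\<forall>v. v \<notin> F \<longrightarrow> x $ v = 0) \<and> sum (($) x) UNIV = 1}"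

lemma std_convex: "convex (std F)"
  unfolding convex_def std_def
proof (intro ballI allI impI)
  fix x y :: "(real,'a) vec" and u v :: real
  assume x: "x \<in> {x. (\<forall>v. 0 \<le> x $ v) \<and> (\<forall>v. v \<notin> F \<longrightarrow> x $ v = 0) \<and> sum (($) x) UNIV = 1}"
    and y: "y \<in> {x. (\<forall>v. 0 \<le> x $ v) \<and> (\<forall>v. v \<notin> F \<longrightarrow> x $ v = 0) \<and> sum (($) x) UNIV = 1}"
    and uv: "0 \<le> u" "0 \<le> v" "u + v = 1"
  have "sum (($) (u *\<^sub>R x + v *\<^sub>R y)) UNIV = u * sum (($) x) UNIV + v * sum (($) y) UNIV"
    by (simp add: sum.distrib sum_distrib_left)
  then show "u *\<^sub>R x + v *\<^sub>R y \<in> {x. (\<forall>v. 0 \<le> x $ v) \<and> (\<forall>v. v \<notin> F \<longrightarrow> x $ v = 0) \<and> sum (($) x) UNIV = 1}"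
    using x y uv by auto
qed

lemma conv_ax: "convex hull (ax ` F) = std F"
proof
  show "convex hull (ax ` F) \<subseteq> std F"
  proof (rule hull_minimal)
    show "ax ` F \<subseteq> std F" unfolding std_def by (auto simp: ax_nth)
  qed (rule std_convex)
  show "std F \<subseteq> convex hull (ax ` F)"
  proof
    fix x assume x: "x \<in> std F"
    then have x0: "\<forall>v. v \<notin> F \<longrightarrow> x $ v = 0" and xn: "\<forall>v. 0 \<le> x $ v" and xs: "sum (($) x) UNIV = 1"
      unfolding std_def by auto
    have "sum (($) x) F = sum (($) x) UNIV"
      by (rule sum.mono_neutral_left) (use x0 in auto)
    then have s1: "sum (\<lambda>v. x $ v) F = 1" using xs by simp
    have "(\<Sum>v\<in>F. x $ v *\<^sub>R ax v) \<in> convex hull (ax ` F)"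
      by (rule convex_sum[OF finite_class.finite convex_convex_hull s1]) (use xn in \<open>auto intro: hull_inc\<close>)
    then show "x \<in> convex hull (ax ` F)" using ax_expand[OF x0] by simp
  qed
qed

lemma ax_indep: "\<not> affine_dependent (ax ` (F::'n::finite set))"
proof -
  have "ax ` F \<subseteq> Basis" unfolding Basis_vec_def ax_def by auto
  then have "independent (ax ` F)" using independent_mono[OF independent_Basis] by blast
  then show ?thesis using affine_dependent_imp_dependent by blast
qed

lemma rel_int_ax: "rel_interior (convex hull (ax ` F)) = {x \<in> std F. \<forall>v\<in>F. x $ v > 0}"
proof
  have inj: "inj_on ax F" using ax_inj by (rule inj_on_subset) simp
  show "rel_interior (convex hull (ax ` F)) \<subseteq> {x \<in> std F. \<forall>v\<in>F. x $ v > 0}"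
  proof
    fix y assume "y \<in> rel_interior (convex hull (ax ` F))"
    then obtain u where u: "\<forall>e\<in>ax ` F. 0 < u e" "sum u (ax ` F) = 1" "(\<Sum>e\<in>ax ` F. u e *\<^sub>R e) = y"
      unfolding rel_interior_convex_hull_explicit[OF ax_indep] by blast
    have y: "y = (\<Sum>v\<in>F. u (ax v) *\<^sub>R ax v)" using u(3) sum.reindex[OF inj, of "\<lambda>e. u e *\<^sub>R e"] by simp
    have s: "(\<Sum>v\<in>F. u (ax v)) = 1" using u(2) sum.reindex[OF inj, of u] by simp
    have yn: "y $ w = (if w \<in> F then u (ax w) else 0)" for w unfolding y by (rule ax_comb)
    have "sum (($) y) UNIV = sum (($) y) F"
      by (rule sum.mono_neutral_right) (auto simp: yn)
    also have "\<dots> = 1" using s yn by simp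
    finally show "y \<in> {x \<in> std F. \<forall>v\<in>F. x $ v > 0}"
      unfolding std_def using yn u(1) by (auto simp: less_imp_le)
  qed
  show "{x \<in> std F. \<forall>v\<in>F. x $ v > 0} \<subseteq> rel_interior (convex hull (ax ` F))"
  proof
    fix x assume "x \<in> {x \<in> std F. \<forall>v\<in>F. x $ v > 0}"
    then have x0: "\<forall>v. v \<notin> F \<longrightarrow> x $ v = 0" and xp: "\<forall>v\<in>F. x $ v > 0" and xs: "sum (($) x) UNIV = 1"
      unfolding std_def by auto
    define u where "u = (\<lambda>e. x $ (inv ax e))"
    have ua: "u (ax v) = x $ v" for v unfolding u_def by (simp only: inv_f_f[OF ax_inj])
    have "sum (($) x) F = sum (($) x) UNIV"
      by (rule sum.mono_neutral_left) (use x0 in auto)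
    then have s1: "sum (\<lambda>v. x $ v) F = 1" using xs by simp
    have "\<forall>e\<in>ax ` F. 0 < u e" using xp ua by auto
    moreover have "sum u (ax ` F) = 1" using sum.reindex[OF inj, of u] ua s1 by simp
    moreover have "(\<Sum>e\<in>ax ` F. u e *\<^sub>R e) = x"
      using sum.reindex[OF inj, of "\<lambda>e. u e *\<^sub>R e"] ua ax_expand[OF x0] by simp
    ultimately show "x \<in> rel_interior (convex hull (ax ` F))"
      unfolding rel_interior_convex_hull_explicit[OF ax_indep] by blast
  qed
qed


lemma homeo_cball_rel:
  fixes P :: "'a::euclidean_space set"
  assumes cP: "convex P" and kP: "compact P" and aP: "aff_dim P = int n" and nD: "n \<le> DIM('a)"
  shows "\<exists>(T::'a set) h k. subspace T \<and> dim T = n \<and> homeomorphism P (cball 0 1 \<inter> T) h k \<and>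
            h ` rel_interior P = ball 0 1 \<inter> T"
proof -
  have "n \<le> dim (UNIV :: 'a set)" using nD by simp
  then obtain T :: "'a set" where T: "subspace T" "dim T = n"
    using choose_subspace_of_subspace[of n "UNIV :: 'a set"] by blast
  define B where "B = cball 0 1 \<inter> T"
  have cB: "convex B" unfolding B_def using T(1) by (intro convex_Int convex_cball subspace_imp_convex)
  have kB: "compact B" unfolding B_def using T(1) by (intro compact_Int_closed compact_cball closed_subspace)
  have aT: "aff_dim T = int n" using aff_dim_subspace[OF T(1)] T(2) by simp
  have 0: "(0::'a) \<in> T \<inter> ball 0 1" using subspace_0[OF T(1)] by simp
  have "aff_dim (T \<inter> ball 0 1) = aff_dim T"
    by (rule aff_dim_convex_Int_open[OF subspace_imp_convex[OF T(1)] open_ball]) (use 0 in blast)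
  moreover have "aff_dim (T \<inter> ball 0 1) \<le> aff_dim B" unfolding B_def by (rule aff_dim_subset) auto
  moreover have "aff_dim B \<le> aff_dim T" unfolding B_def by (rule aff_dim_subset) auto
  ultimately have aB: "aff_dim B = int n" using aT by simp
  have "P homeomorphic B" by (rule homeomorphic_convex_compact_sets[OF cP kP cB kB]) (simp add: aP aB)
  then obtain h k where hk: "homeomorphism P B h k" unfolding homeomorphic_def by blast
  then have hP: "h ` P = B" and kB': "k ` B = P" and ch: "continuous_on P h" and ck: "continuous_on B k"
    and kh: "\<forall>x\<in>P. k (h x) = x" and hk': "\<forall>y\<in>B. h (k y) = y"
    unfolding homeomorphism_def by auto
  have ih: "inj_on h P" using kh by (metis inj_onI)
  have ik: "inj_on k B" using hk' by (metis inj_onI)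
  have 1: "h \<in> rel_interior P \<rightarrow> rel_interior (h ` P)"
    by (rule continuous_image_subset_rel_interior[OF ch ih, of B]) (use hP aP aB in auto)
  have 2: "k \<in> rel_interior B \<rightarrow> rel_interior (k ` B)"
    by (rule continuous_image_subset_rel_interior[OF ck ik, of P]) (use kB' aP aB in auto)
  have "h ` rel_interior P = rel_interior B"
  proof
    show "h ` rel_interior P \<subseteq> rel_interior B" using 1 hP by auto
    show "rel_interior B \<subseteq> h ` rel_interior P"
    proof
      fix y assume y: "y \<in> rel_interior B"
      then have "k y \<in> rel_interior P" using 2 kB' by auto
      moreover have "h (k y) = y" using hk' y rel_interior_subset by blast
      ultimately show "y \<in> h ` rel_interior P" by (metis imageI)
    qed
  qed
  moreover have "rel_interior B = ball 0 1 \<inter> T"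
  proof -
    have rc: "rel_interior (cball (0::'a) 1) = ball 0 1"
      by (subst rel_interior_nonempty_interior) auto
    have rT: "rel_interior T = T" by (rule rel_interior_affine[OF subspace_imp_affine[OF T(1)]])
    have "rel_interior B = rel_interior (cball 0 1) \<inter> rel_interior T"
      unfolding B_def
      by (rule convex_rel_interior_inter_two[OF convex_cball subspace_imp_convex[OF T(1)]])
         (use rc rT 0 in blast)
    then show ?thesis using rc rT by simp
  qed
  ultimately show ?thesis using T hk unfolding B_def by blast
qed

lemma endpoints_mono: "G' \<subseteq> G \<Longrightarrow> endpoints G' \<subseteq> endpoints G"
  unfolding endpoints_def by blast

lemma rep_std:
  assumes "rep G l x" "sum (($) x) UNIV = 1" "endpoints G \<subseteq> F"
  shows "x \<in> std F"
proof -
  have "\<forall>v. v \<notin> F \<longrightarrow> x $ v = 0" using rep_supp[OF assms(1)] assms(3) by blast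
  then show ?thesis unfolding std_def using rep_nonneg[OF assms(1)] assms(2) by blast
qed

lemma poly_F:
  "polyhedron {G \<in> interval_chain_complex. endpoints G \<subseteq> F} fv = convex hull (ax ` F)"
proof
  show "polyhedron {G \<in> interval_chain_complex. endpoints G \<subseteq> F} fv \<subseteq> convex hull (ax ` F)"
  proof
    fix x assume "x \<in> polyhedron {G \<in> interval_chain_complex. endpoints G \<subseteq> F} fv"
    then obtain G where G: "G \<in> interval_chain_complex" "endpoints G \<subseteq> F" "x \<in> convex hull (fv ` G)"
      unfolding polyhedron_def by blast
    then obtain G' l where "G' \<subseteq> G" "rep G' l x" "sum (($) x) UNIV = 1"
      using conv_char[OF G(1), of x] by blast
    then have "x \<in> std F" using rep_std endpoints_mono G(2) by (metis order_trans)
    then show "x \<in> convex hull (ax ` F)" using conv_ax by blast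
  qed
  show "convex hull (ax ` F) \<subseteq> polyhedron {G \<in> interval_chain_complex. endpoints G \<subseteq> F} fv"
  proof
    fix x assume "x \<in> convex hull (ax ` F)"
    then have x: "x \<in> std F" using conv_ax by blast
    then obtain G l where r: "rep G l x" using rep_exists unfolding std_def by blast
    have GIC: "G \<in> interval_chain_complex" using r unfolding rep_def by blast
    have "endpoints G \<subseteq> F" using rep_supp[OF r] x unfolding std_def by blast
    moreover have "x \<in> convex hull (fv ` G)"
      using conv_char[OF GIC, of x] r x unfolding std_def by blast
    ultimately show "x \<in> polyhedron {G \<in> interval_chain_complex. endpoints G \<subseteq> F} fv"
      unfolding polyhedron_def using GIC by blast
  qed
qed

lemma relint_F:
  "(\<Union>G\<in>{G \<in> interval_chain_complex. endpoints G = F}. rel_interior (convex hull (fv ` G)))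
     = rel_interior (convex hull (ax ` F))"
proof
  show "(\<Union>G\<in>{G \<in> interval_chain_complex. endpoints G = F}. rel_interior (convex hull (fv ` G)))
     \<subseteq> rel_interior (convex hull (ax ` F))"
  proof
    fix x assume "x \<in> (\<Union>G\<in>{G \<in> interval_chain_complex. endpoints G = F}. rel_interior (convex hull (fv ` G)))"
    then obtain G where G: "G \<in> interval_chain_complex" "endpoints G = F" "x \<in> rel_interior (convex hull (fv ` G))"
      by blast
    then obtain l where r: "rep G l x" and s: "sum (($) x) UNIV = 1" using rel_int_char[OF G(1), of x] by blast
    have "x \<in> std F" using rep_std[OF r s] G(2) by simp
    moreover have "\<forall>v\<in>F. x $ v > 0"
      using rep_supp[OF r] G(2) rep_nonneg[OF r] by (metis less_eq_real_def mem_Collect_eq)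
    ultimately show "x \<in> rel_interior (convex hull (ax ` F))" unfolding rel_int_ax by blast
  qed
  show "rel_interior (convex hull (ax ` F)) \<subseteq>
      (\<Union>G\<in>{G \<in> interval_chain_complex. endpoints G = F}. rel_interior (convex hull (fv ` G)))"
  proof
    fix x assume "x \<in> rel_interior (convex hull (ax ` F))"
    then have x: "x \<in> std F" and xp: "\<forall>v\<in>F. x $ v > 0" unfolding rel_int_ax by auto
    then obtain G l where r: "rep G l x" using rep_exists unfolding std_def by blast
    have GIC: "G \<in> interval_chain_complex" using r unfolding rep_def by blast
    have "{v. x $ v \<noteq> 0} = F" using x xp unfolding std_def by force
    then have "endpoints G = F" using rep_supp[OF r] by simp
    moreover have "x \<in> rel_interior (convex hull (fv ` G))"
      using rel_int_char[OF GIC, of x] r x unfolding std_def by blast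
    ultimately show "x \<in> (\<Union>G\<in>{G \<in> interval_chain_complex. endpoints G = F}. rel_interior (convex hull (fv ` G)))"
      using GIC by blast
  qed
qed


lemma IC_simplicial: "simplicial_complex (interval_chain_complex :: ('n::{finite,linorder}) set set set)"
proof -
  have "finite (interval_chain_complex :: ('n::{finite,linorder}) set set set)" by simp
  moreover have "{} \<in> (interval_chain_complex :: ('n::{finite,linorder}) set set set)"
    unfolding interval_chain_complex_def by simp
  moreover have "\<forall>G\<in>(interval_chain_complex :: ('n::{finite,linorder}) set set set). finite G" by simp
  moreover have "\<forall>G\<in>(interval_chain_complex :: ('n::{finite,linorder}) set set set). \<forall>H. H \<subseteq> G \<longrightarrow> H \<in> interval_chain_complex"
    using IC_sub by blast
  ultimately show ?thesis unfolding simplicial_complex_def by blast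
qed

lemma IC_geo: "geometric_realization (interval_chain_complex :: ('n::{finite,linorder}) set set set) fv"
  unfolding geometric_realization_def
  using IC_fv_inj fv_aff_indep fv_inter by blast

lemma endpoints_empty:
  assumes "G \<in> interval_chain_complex" "endpoints G \<subseteq> {}"
  shows "G = {}"
proof (rule ccontr)
  assume "G \<noteq> {}"
  then obtain I where I: "I \<in> G" by blast
  then have "I \<in> intervals" using IC_intervals assms(1) by blast
  have "G \<subseteq> intervals" using IC_intervals assms(1) by blast
  then have "Min I \<in> endpoints G" using endpoints_alt[of G] I by blast
  then show False using assms(2) by blast
qed

lemma aff_dim_axF:
  assumes "F \<noteq> {}"
  shows "aff_dim (convex hull (ax ` F)) = int (card F - 1)"
proof -
  have "of_nat (card (ax ` F)) = aff_dim (ax ` F) + 1" by (rule aff_dim_affine_independent[OF ax_indep])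
  moreover have "card (ax ` F) = card F" by (rule card_image) (rule inj_on_subset[OF ax_inj], simp)
  moreover have "card F \<ge> 1" using assms by (simp add: Suc_le_eq card_gt_0_iff)
  ultimately show ?thesis by (simp add: aff_dim_convex_hull of_nat_diff)
qed

theorem geo_part:
  "geometric_subdivision TYPE(real^'n::{finite,linorder}) (UNIV :: 'n set)
            (interval_chain_complex :: 'n set set set) endpoints"
  unfolding geometric_subdivision_def
proof (intro conjI exI[of _ ax] exI[of _ fv])
  show "finite (UNIV :: 'n set)" by simp
  show "inj_on ax (UNIV :: 'n set)" using ax_inj by simp
  show "\<not> affine_dependent (ax ` (UNIV :: 'n set))" by (rule ax_indep)
  show "polyhedron (interval_chain_complex :: 'n set set set) fv = convex hull (ax ` UNIV)"
    using poly_F[of "UNIV :: 'n set"] by simp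
  show "\<forall>G\<in>(interval_chain_complex :: 'n set set set). convex hull (fv ` G) \<subseteq> convex hull (ax ` endpoints G) \<and>
      rel_interior (convex hull (fv ` G)) \<subseteq> rel_interior (convex hull (ax ` endpoints G))"
  proof
    fix G :: "'n set set" assume G: "G \<in> interval_chain_complex"
    have "convex hull (fv ` G) \<subseteq> polyhedron {G' \<in> interval_chain_complex. endpoints G' \<subseteq> endpoints G} fv"
      unfolding polyhedron_def using G by blast
    moreover have "rel_interior (convex hull (fv ` G)) \<subseteq>
       (\<Union>G'\<in>{G' \<in> interval_chain_complex. endpoints G' = endpoints G}. rel_interior (convex hull (fv ` G')))"
      using G by blast
    ultimately show "convex hull (fv ` G) \<subseteq> convex hull (ax ` endpoints G) \<and>
      rel_interior (convex hull (fv ` G)) \<subseteq> rel_interior (convex hull (ax ` endpoints G))"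
      unfolding poly_F relint_F by blast
  qed
  show "simplicial_subdivision_wrt (UNIV :: 'n set) (interval_chain_complex :: 'n set set set) endpoints fv"
    unfolding simplicial_subdivision_wrt_def
  proof (intro conjI allI impI ballI)
    show "simplicial_complex (interval_chain_complex :: 'n set set set)" by (rule IC_simplicial)
    show "geometric_realization (interval_chain_complex :: 'n set set set) fv" by (rule IC_geo)
    fix G :: "'n set set" show "endpoints G \<subseteq> UNIV" by simp
  next
    fix F :: "'n set" and G H assume "G \<in> interval_chain_complex" "endpoints G \<subseteq> F \<and> H \<subseteq> G"
    then show "endpoints H \<subseteq> F" using endpoints_mono by blast
  next
    fix F :: "'n set" assume "F = {}"
    show "{G \<in> (interval_chain_complex :: 'n set set set). endpoints G \<subseteq> F} = {{}}"
    proof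
      show "{G \<in> (interval_chain_complex :: 'n set set set). endpoints G \<subseteq> F} \<subseteq> {{}}"
        using endpoints_empty \<open>F = {}\<close> by blast
      show "{{}} \<subseteq> {G \<in> (interval_chain_complex :: 'n set set set). endpoints G \<subseteq> F}"
        by (auto simp: interval_chain_complex_def endpoints_def)
    qed
  next
    fix F :: "'n set" assume F: "F \<noteq> {}"
    have "card F - 1 \<le> DIM((real, 'n) vec)" using card_mono[of "UNIV :: 'n set" F] by simp
    then obtain T :: "(real,'n) vec set" and h k where
      Thk: "subspace T" "dim T = card F - 1" "homeomorphism (convex hull (ax ` F)) (cball 0 1 \<inter> T) h k"
        "h ` rel_interior (convex hull (ax ` F)) = ball 0 1 \<inter> T"
      using homeo_cball_rel[OF convex_convex_hull finite_imp_compact_convex_hull[OF finite_imageI[OF finite_class.finite]]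
          aff_dim_axF[OF F]] by blast
    show "\<exists>(T::(real,'n) vec set) h k. subspace T \<and> dim T = card F - 1 \<and>
             homeomorphism (polyhedron {G\<in>interval_chain_complex. endpoints G \<subseteq> F} fv) (cball 0 1 \<inter> T) h k \<and>
             h ` (\<Union>G\<in>{G\<in>interval_chain_complex. endpoints G = F}. rel_interior (convex hull (fv ` G))) = ball 0 1 \<inter> T"
      unfolding poly_F relint_F using Thk by blast
  qed
qed


definition subc :: "('n::{finite,linorder}) set \<Rightarrow> 'n set set set" where
  "subc J = {G \<in> interval_chain_complex. \<forall>I\<in>G. I \<subseteq> J}"

lemma subc_UNIV: "subc UNIV = interval_chain_complex"
  unfolding subc_def by simp

lemma insert_in_subc:
  assumes "J \<in> intervals" "C \<in> subc J"
  shows "insert J C \<in> subc J"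
proof -
  have C: "C \<subseteq> intervals" "\<forall>I\<in>C. \<forall>K\<in>C. I \<subseteq> K \<or> K \<subseteq> I" "\<forall>I\<in>C. I \<subseteq> J"
    using assms(2) unfolding subc_def interval_chain_complex_def by auto
  have "insert J C \<subseteq> intervals" using C(1) assms(1) by blast
  moreover have "\<forall>I\<in>insert J C. \<forall>K\<in>insert J C. I \<subseteq> K \<or> K \<subseteq> I" using C(2,3) by blast
  moreover have "\<forall>I\<in>insert J C. I \<subseteq> J" using C(3) by blast
  ultimately show ?thesis unfolding subc_def interval_chain_complex_def by blast
qed

lemma facet_contains:
  assumes "J \<in> intervals" "C \<in> facets (subc J)"
  shows "J \<in> C"
proof -
  have C: "C \<in> subc J" "\<forall>H\<in>subc J. C \<subseteq> H \<longrightarrow> H = C" using assms(2) unfolding facets_def by auto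
  have "insert J C \<in> subc J" by (rule insert_in_subc[OF assms(1) C(1)])
  then have "insert J C = C" using C(2) by blast
  then show ?thesis by blast
qed

lemma aux_sub:
  assumes "J1 = J - {c}" "J1 \<subseteq> K" "K \<subseteq> J" "K \<noteq> J"
  shows "K \<subseteq> J1"
proof (cases "c \<in> K")
  case True
  then have "J \<subseteq> K" using assms(1,2) by blast
  then show ?thesis using assms(3,4) by blast
next
  case False
  then show ?thesis using assms(1,3) by blast
qed

lemma recA:
  assumes J: "J \<in> intervals" and J1: "J1 = J - {c}" "c \<in> J" and C: "C \<in> facets (subc J1)"
    and J1i: "J1 \<in> intervals"
  shows "insert J C \<in> facets (subc J)"
proof -
  have Cs: "C \<in> subc J1" and Cm: "\<forall>H\<in>subc J1. C \<subseteq> H \<longrightarrow> H = C" using C unfolding facets_def by auto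
  have J1C: "J1 \<in> C" by (rule facet_contains[OF J1i C])
  have "C \<in> subc J" using Cs J1 unfolding subc_def by blast
  then have ins: "insert J C \<in> subc J" by (rule insert_in_subc[OF J])
  have "H = insert J C" if H: "H \<in> subc J" "insert J C \<subseteq> H" for H
  proof -
    have HIC: "H \<in> interval_chain_complex" and HJ: "\<forall>I\<in>H. I \<subseteq> J" using H(1) unfolding subc_def by auto
    define H' where "H' = H - {J}"
    have "\<forall>K\<in>H'. K \<subseteq> J1"
    proof
      fix K assume K: "K \<in> H'"
      then have "K \<in> H" "K \<noteq> J" unfolding H'_def by auto
      moreover have "J1 \<in> H" using J1C H(2) by blast
      ultimately have disj: "K \<subseteq> J1 \<or> J1 \<subseteq> K" using IC_chain[OF HIC] by blast
      have KJ: "K \<subseteq> J" using HJ \<open>K \<in> H\<close> by blast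
      show "K \<subseteq> J1"
      proof (cases "K \<subseteq> J1")
        case False
        then have "J1 \<subseteq> K" using disj by blast
        then show ?thesis using aux_sub[OF J1(1) _ KJ \<open>K \<noteq> J\<close>] by blast
      qed
    qed
    moreover have "H' \<in> interval_chain_complex" unfolding H'_def by (rule IC_sub[OF HIC]) blast
    ultimately have "H' \<in> subc J1" unfolding subc_def by simp
    moreover have "C \<subseteq> H'"
    proof -
      have CJ1: "\<forall>I\<in>C. I \<subseteq> J1" using Cs unfolding subc_def by blast
      have "J \<notin> C"
      proof
        assume "J \<in> C"
        then have "c \<in> J1" using CJ1 J1(2) by blast
        then show False using J1(1) by blast
      qed
      then show ?thesis using H(2) unfolding H'_def by blast
    qed
    ultimately have "H' = C" using Cm by blast
    then show "H = insert J C" using H(2) unfolding H'_def by blast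
  qed
  then show ?thesis using ins unfolding facets_def by blast
qed

lemma recB:
  assumes J: "J \<in> intervals" and J1: "J1 = J - {c}" "c \<in> J" and D: "D \<in> facets (subc J)"
    and nc: "\<forall>K\<in>D-{J}. c \<notin> K"
  shows "D - {J} \<in> facets (subc J1)"
proof -
  have Ds: "D \<in> subc J" and Dm: "\<forall>H\<in>subc J. D \<subseteq> H \<longrightarrow> H = D" using D unfolding facets_def by auto
  have DIC: "D \<in> interval_chain_complex" and DJ: "\<forall>I\<in>D. I \<subseteq> J" using Ds unfolding subc_def by auto
  have JD: "J \<in> D" by (rule facet_contains[OF J D])
  have "\<forall>I\<in>D - {J}. I \<subseteq> J1"
  proof
    fix I assume "I \<in> D - {J}"
    then have "I \<subseteq> J" "c \<notin> I" using DJ nc by auto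
    then show "I \<subseteq> J1" using J1(1) by blast
  qed
  moreover have "D - {J} \<in> interval_chain_complex" using IC_sub[OF DIC] by blast
  ultimately have s1: "D - {J} \<in> subc J1" unfolding subc_def by blast
  have "H = D - {J}" if H: "H \<in> subc J1" "D - {J} \<subseteq> H" for H
  proof -
    have "H \<in> subc J" using H(1) J1 unfolding subc_def by blast
    then have "insert J H \<in> subc J" by (rule insert_in_subc[OF J])
    moreover have "D \<subseteq> insert J H" using H(2) by blast
    ultimately have "insert J H = D" using Dm by blast
    moreover have "J \<notin> H"
    proof
      assume "J \<in> H"
      moreover have "\<forall>I\<in>H. I \<subseteq> J1" using H(1) unfolding subc_def by blast
      ultimately have "c \<in> J1" using J1(2) by blast
      then show False using J1(1) by blast
    qed
    ultimately show ?thesis by blast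
  qed
  then show ?thesis using s1 unfolding facets_def by blast
qed


lemma succ_ex:
  fixes a b :: "'n::{finite,linorder}"
  assumes "a < b"
  obtains a' where "a < a'" "a' \<le> b" "{a..b} - {a} = {a'..b}"
proof -
  define S where "S = {x. a < x}"
  have bS: "b \<in> S" unfolding S_def using assms by simp
  define a' where "a' = Min S"
  have "a' \<in> S" unfolding a'_def using bS by (intro Min_in) auto
  then have 1: "a < a'" unfolding S_def by simp
  have 2: "a' \<le> b" unfolding a'_def using Min_le[OF _ bS] by simp
  have 3: "{a..b} - {a} = {a'..b}"
  proof
    show "{a..b} - {a} \<subseteq> {a'..b}"
    proof
      fix x assume "x \<in> {a..b} - {a}"
      then have "x \<in> S" "x \<le> b" unfolding S_def by auto
      then show "x \<in> {a'..b}" unfolding a'_def using Min_le[OF _ \<open>x \<in> S\<close>] by simp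
    qed
    show "{a'..b} \<subseteq> {a..b} - {a}" using 1 by auto
  qed
  show ?thesis using 1 2 3 that by blast
qed

lemma pred_ex:
  fixes a b :: "'n::{finite,linorder}"
  assumes "a < b"
  obtains b' where "b' < b" "a \<le> b'" "{a..b} - {b} = {a..b'}"
proof -
  define S where "S = {x. x < b}"
  have aS: "a \<in> S" unfolding S_def using assms by simp
  define b' where "b' = Max S"
  have "b' \<in> S" unfolding b'_def using aS by (intro Max_in) auto
  then have 1: "b' < b" unfolding S_def by simp
  have 2: "a \<le> b'" unfolding b'_def using Max_ge[OF _ aS] by simp
  have 3: "{a..b} - {b} = {a..b'}"
  proof
    show "{a..b} - {b} \<subseteq> {a..b'}"
    proof
      fix x assume "x \<in> {a..b} - {b}"
      then have "x \<in> S" "a \<le> x" unfolding S_def by auto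
      then show "x \<in> {a..b'}" unfolding b'_def using Max_ge[OF _ \<open>x \<in> S\<close>] by simp
    qed
    show "{a..b'} \<subseteq> {a..b} - {b}" using 1 by auto
  qed
  show ?thesis using 1 2 3 that by blast
qed

lemma facets_singleton:
  assumes "J = {a}"
  shows "facets (subc J) = {{J}}"
proof -
  have "J = {a..a}" using assms by simp
  then have Ji: "J \<in> intervals" unfolding intervals_def by blast
  have Js: "{J} \<in> subc J" unfolding subc_def interval_chain_complex_def using Ji by auto
  have sub: "H \<subseteq> {J}" if "H \<in> subc J" for H
  proof
    fix I assume "I \<in> H"
    then have "I \<in> intervals" "I \<subseteq> J" using that unfolding subc_def interval_chain_complex_def by auto
    moreover have "I \<noteq> {}" using intervalsE(5) \<open>I \<in> intervals\<close> by blast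
    ultimately show "I \<in> {J}" using assms by blast
  qed
  show ?thesis
  proof
    show "facets (subc J) \<subseteq> {{J}}"
    proof
      fix G assume "G \<in> facets (subc J)"
      then have "G \<in> subc J" "\<forall>H\<in>subc J. G \<subseteq> H \<longrightarrow> H = G" unfolding facets_def by auto
      then show "G \<in> {{J}}" using sub Js by blast
    qed
    show "{{J}} \<subseteq> facets (subc J)" unfolding facets_def using Js sub by blast
  qed
qed

lemma count_facets:
  "J \<in> intervals \<Longrightarrow> card (facets (subc J)) = 2 ^ (card J - 1)"
proof (induction "card J" arbitrary: J rule: less_induct)
  case less
  obtain a b where ab: "a \<le> b" "J = {a..b}" using less.prems unfolding intervals_def by blast
  show ?case
  proof (cases "a = b")
    case True
    then have Ja: "J = {a}" using ab by simp
    then show ?thesis using facets_singleton[OF Ja] by simp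
  next
    case False
    then have alb: "a < b" using ab by simp
    obtain a' where a': "a < a'" "a' \<le> b" "{a..b} - {a} = {a'..b}" using succ_ex[OF alb] by blast
    obtain b' where b': "b' < b" "a \<le> b'" "{a..b} - {b} = {a..b'}" using pred_ex[OF alb] by blast
    define J1 where "J1 = J - {a}"
    define J2 where "J2 = J - {b}"
    have aJ: "a \<in> J" and bJ: "b \<in> J" using ab by auto
    have J1i: "J1 \<in> intervals" unfolding J1_def intervals_def using ab(2) a' by blast
    have J2i: "J2 \<in> intervals" unfolding J2_def intervals_def using ab(2) b' by blast
    have cJ1: "card J1 = card J - 1" unfolding J1_def using aJ by simp
    have cJ2: "card J2 = card J - 1" unfolding J2_def using bJ by simp
    have "{a, b} \<subseteq> J" using aJ bJ by simp
    then have "card {a, b} \<le> card J" by (intro card_mono) auto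
    then have c2: "card J \<ge> 2" using alb by simp
    have "card J1 < card J" using cJ1 c2 by simp
    then have IH1: "card (facets (subc J1)) = 2 ^ (card J1 - 1)" using less.hyps J1i by blast
    have "card J2 < card J" using cJ2 c2 by simp
    then have IH2: "card (facets (subc J2)) = 2 ^ (card J2 - 1)" using less.hyps J2i by blast
    define F1 where "F1 = facets (subc J1)"
    define F2 where "F2 = facets (subc J2)"
    have eq: "facets (subc J) = insert J ` (F1 \<union> F2)"
    proof
      show "facets (subc J) \<subseteq> insert J ` (F1 \<union> F2)"
      proof
        fix D assume D: "D \<in> facets (subc J)"
        then have Ds: "D \<in> subc J" unfolding facets_def by auto
        then have DIC: "D \<in> interval_chain_complex" and DJ: "\<And>I. I \<in> D \<Longrightarrow> I \<subseteq> J"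
          unfolding subc_def by auto
        have JD: "J \<in> D" by (rule facet_contains[OF less.prems D])
        have DD: "D = insert J (D - {J})" using JD by blast
        from chain_split[OF DIC JD DJ ab(2)]
        show "D \<in> insert J ` (F1 \<union> F2)"
        proof
          assume "\<forall>K\<in>D - {J}. a \<notin> K"
          then have "D - {J} \<in> F1" unfolding F1_def by (rule recB[OF less.prems J1_def aJ D])
          then show ?thesis using DD by blast
        next
          assume "\<forall>K\<in>D - {J}. b \<notin> K"
          then have "D - {J} \<in> F2" unfolding F2_def by (rule recB[OF less.prems J2_def bJ D])
          then show ?thesis using DD by blast
        qed
      qed
      show "insert J ` (F1 \<union> F2) \<subseteq> facets (subc J)"
        unfolding F1_def F2_def using recA[OF less.prems J1_def aJ _ J1i] recA[OF less.prems J2_def bJ _ J2i]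
        by blast
    qed
    have notJ: "J \<notin> C" if "C \<in> F1 \<union> F2" for C
    proof
      assume "J \<in> C"
      show False
      proof (cases "C \<in> F1")
        case True
        then have "\<forall>I\<in>C. I \<subseteq> J1" unfolding F1_def facets_def subc_def by blast
        then have "a \<in> J1" using \<open>J \<in> C\<close> aJ by blast
        then show False unfolding J1_def by blast
      next
        case False
        then have "C \<in> F2" using that by blast
        then have "\<forall>I\<in>C. I \<subseteq> J2" unfolding F2_def facets_def subc_def by blast
        then have "b \<in> J2" using \<open>J \<in> C\<close> bJ by blast
        then show False unfolding J2_def by blast
      qed
    qed
    have inj: "inj_on (insert J) (F1 \<union> F2)"
    proof (rule inj_onI)
      fix C1 C2 assume "C1 \<in> F1 \<union> F2" "C2 \<in> F1 \<union> F2" "insert J C1 = insert J C2"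
      then show "C1 = C2" using notJ[of C1] notJ[of C2] by (metis insert_ident)
    qed
    have disj: "F1 \<inter> F2 = {}"
    proof (rule ccontr)
      assume "F1 \<inter> F2 \<noteq> {}"
      then obtain C where C1: "C \<in> F1" and C2: "C \<in> F2" by blast
      have "J1 \<in> C" using facet_contains[OF J1i] C1 unfolding F1_def by blast
      moreover have "\<forall>I\<in>C. I \<subseteq> J2" using C2 unfolding F2_def facets_def subc_def by blast
      ultimately have "J1 \<subseteq> J2" by blast
      moreover have "b \<in> J1" unfolding J1_def using bJ alb by simp
      ultimately have "b \<in> J2" by blast
      then show False unfolding J2_def by blast
    qed
    have "card (facets (subc J)) = card (F1 \<union> F2)" unfolding eq by (rule card_image[OF inj])
    also have "\<dots> = card F1 + card F2" by (rule card_Un_disjoint[OF finite_any finite_any disj])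
    also have "\<dots> = 2 ^ (card J - 2) + 2 ^ (card J - 2)"
      unfolding F1_def F2_def IH1 IH2 cJ1 cJ2 by (simp add: numeral_2_eq_2)
    also have "\<dots> = 2 ^ (card J - 1)"
    proof -
      obtain m where m: "card J = Suc (Suc m)" using c2 by (metis add_2_eq_Suc le_Suc_ex)
      show ?thesis unfolding m by simp
    qed
    finally show ?thesis .
  qed
qed

theorem facets_count:
  "card (facets (interval_chain_complex :: ('n::{finite,linorder}) set set set)) = 2 ^ (CARD('n) - 1)"
proof -
  have "(UNIV :: 'n set) = {Min UNIV..Max UNIV}"
    by (auto intro: Min_le Max_ge)
  moreover have "Min (UNIV :: 'n set) \<le> Max UNIV" by (rule Min_le) auto
  ultimately have "(UNIV :: 'n set) \<in> intervals" unfolding intervals_def by blast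
  from count_facets[OF this] show ?thesis by (simp add: subc_UNIV)
qed


theorem lemma6p2:
  shows "geometric_subdivision TYPE(real^'n::{finite,linorder}) (UNIV :: 'n set)
            (interval_chain_complex :: 'n set set set) endpoints
       \<and> card (facets (interval_chain_complex :: 'n set set set)) = 2 ^ (CARD('n) - 1)"
  by (rule conjI[OF geo_part facets_count])

end
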